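(* For every positive integer $n$, \[ \sum_{j=1}^{n}(-1)^j\left(\binom{n}{j}-1\right)\frac{B_j}{j}=n-H_n . \]
   Context: $B_j$ is the $j$th Bernoulli number ($\frac{t}{e^t-1}=\sum_{m\ge0}B_m\frac{t^m}{m!}$, so $B_1=-1/2$). $H_n=\sum_{i=1}^n1/i$. *)

theory Defs
  imports "HOL-Analysis.Analysis" "HOL-Computational_Algebra.Formal_Power_Series"
begin

text \<open>Bernoulli numbers defined by the exponential generating function
  t/(e^t - 1) = sum_m B_m t^m/m!, as a formal power series (so B_1 = -1/2).\<close>
definition bernoulli :: "nat \<Rightarrow> real" where
  "bernoulli m = fact m * fps_nth (fps_X / (fps_exp 1 - 1)) m"

end

theory Submission
  imports Defs
begin

abbreviation "EE \<equiv> (fps_exp 1 - 1 :: real fps)"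
abbreviation "GG \<equiv> (fps_X / EE :: real fps)"

lemma EE_nz: "EE \<noteq> 0"
proof
  assume "EE = 0" then have "fps_nth (EE) 1 = 0" by simp
  then show False by simp
qed

lemma EE_sub: "subdegree EE = 1"
  by (rule subdegreeI) auto

lemma GE: "GG * EE = fps_X"
  by (rule fps_times_divide_eq[OF EE_nz]) (subst EE_sub, simp)

lemma bern_rec: "(\<Sum>k<m. real (m choose k) * bernoulli k) = (if m = 1 then 1 else 0)"
proof -
  have "fps_nth (GG * EE) m = (\<Sum>k<m. fps_nth (GG) k / fact (m - k))"
    unfolding fps_mult_nth
    by (cases m) (auto simp: atLeast0AtMost lessThan_Suc_atMost[symmetric] intro!: sum.cong)
  hence 1: "(\<Sum>k<m. fps_nth (GG) k / fact (m - k)) = (if m = 1 then 1 else 0)"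
    using GE by (simp add: fps_X_def)
  have "(\<Sum>k<m. real (m choose k) * bernoulli k) = fact m * (\<Sum>k<m. fps_nth (GG) k / fact (m - k))"
    unfolding sum_distrib_left
  proof (rule sum.cong)
    fix k assume "k \<in> {..<m}"
    hence "k \<le> m" by simp
    then show "real (m choose k) * bernoulli k = fact m * (fps_nth (GG) k / fact (m - k))"
      by (simp add: bernoulli_def binomial_fact field_simps)
  qed simp
  also have "\<dots> = (if m = 1 then 1 else 0)" using 1 by simp
  finally show ?thesis .
qed

definition tw :: "real fps \<Rightarrow> real fps" where
  "tw A = Abs_fps (\<lambda>m. (-1)^m * fps_nth (A) m)"

lemma tw_mult: "tw (A * B) = tw A * tw B"
  unfolding tw_def fps_eq_iff
  by (auto simp: fps_mult_nth sum_distrib_left power_add[symmetric] intro!: sum.cong)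

lemma tw_EE: "tw EE = fps_exp (-1) - 1"
  unfolding tw_def fps_eq_iff by (auto simp: power_minus')

lemma tw_X: "tw fps_X = - fps_X"
  unfolding tw_def fps_eq_iff by (auto simp: fps_X_def)

lemma tw_G: "tw GG = GG + fps_X"
proof -
  let ?E' = "fps_exp (-1) - 1 :: real fps"
  have nz: "?E' \<noteq> 0"
  proof
    assume "?E' = 0" then have "fps_nth ?E' 1 = 0" by simp
    then show False by simp
  qed
  have e1: "fps_exp (-1) * fps_exp 1 = (1 :: real fps)"
    using fps_exp_add_mult[of "-1::real" 1] by simp
  have ne: "fps_exp (1::real) \<noteq> 0"
  proof
    assume "fps_exp (1::real) = 0" then have "fps_nth (fps_exp (1::real)) 0 = 0" by simp
    then show False by simp
  qed
  have a: "tw GG * ?E' = - fps_X"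
    using arg_cong[OF GE, of tw] by (simp add: tw_mult tw_EE tw_X)
  have "(GG + fps_X) * ?E' * fps_exp 1 = - fps_X * fps_exp 1"
  proof -
    have "(GG + fps_X) * ?E' * fps_exp 1 = (GG + fps_X) * (1 - fps_exp 1)"
      using e1 by (simp add: algebra_simps)
    also have "\<dots> = - (GG * EE) + fps_X - fps_X * fps_exp 1"
      by (simp add: algebra_simps)
    also have "\<dots> = - fps_X * fps_exp 1" using GE by simp
    finally show ?thesis .
  qed
  hence "(GG + fps_X) * ?E' = - fps_X" using ne by (metis mult_right_cancel)
  with a have "tw GG * ?E' = (GG + fps_X) * ?E'" by simp
  with nz show ?thesis by simp
qed

lemma bern_sign: "(-1)^m * bernoulli m = bernoulli m + (if m = 1 then 1 else 0)"
proof -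
  have "fps_nth (tw GG) m = fps_nth (GG + fps_X) m" using tw_G by simp
  hence "(-1)^m * fps_nth (GG) m = fps_nth (GG) m + (if m = 1 then 1 else 0)"
    by (simp add: tw_def fps_X_def)
  hence "fact m * ((-1)^m * fps_nth (GG) m) = fact m * (fps_nth (GG) m + (if m = 1 then 1 else 0))" by simp
  thus ?thesis by (auto simp: bernoulli_def algebra_simps)
qed


definition Bp :: "nat \<Rightarrow> real" where
  "Bp j = bernoulli j + (if j = 1 then 1 else 0)"

lemma bern0: "bernoulli 0 = 1"
  using bern_rec[of 1] by simp

lemma sumBp: "n \<ge> 1 \<Longrightarrow> (\<Sum>j=1..Suc n. real (Suc n choose j) * Bp j) = real n + bernoulli (Suc n)"
proof -
  assume n: "n \<ge> 1"
  have a: "(\<Sum>j=1..Suc n. real (Suc n choose j) * Bp j)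
      = (\<Sum>j=1..Suc n. real (Suc n choose j) * bernoulli j) + (\<Sum>j=1..Suc n. real (Suc n choose j) * (if j = 1 then 1 else 0))"
    by (simp add: Bp_def algebra_simps sum.distrib)
  have b: "(\<Sum>j=1..Suc n. real (Suc n choose j) * (if j = 1 then 1 else 0)) = real (Suc n)"
    by (simp add: sum.delta if_distrib[of "\<lambda>x. _ * x"] cong: if_cong)
  have c: "(\<Sum>j=0..Suc n. real (Suc n choose j) * bernoulli j) = bernoulli (Suc n)"
    using bern_rec[of "Suc n"] n by (simp add: atLeast0AtMost lessThan_Suc_atMost[symmetric])
  have d: "(\<Sum>j=0..Suc n. real (Suc n choose j) * bernoulli j) = bernoulli 0 + (\<Sum>j=1..Suc n. real (Suc n choose j) * bernoulli j)"
    by (subst sum.atLeast_Suc_atMost) auto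
  show ?thesis using a b c d bern0 by simp
qed

lemma mainBp: "n \<ge> 1 \<Longrightarrow> (\<Sum>j=1..n. (real (n choose j) - 1) * Bp j / real j) = real n - harm n"
proof (induction n rule: nat_induct_at_least)
  case base
  then show ?case by (simp add: harm_def)
next
  case (Suc n)
  have split: "(\<Sum>j=1..Suc n. (real (Suc n choose j) - 1) * Bp j / real j)
     = (\<Sum>j=1..Suc n. (real (n choose j) - 1) * Bp j / real j) + (\<Sum>j=1..Suc n. real (Suc n choose j) * Bp j) / real (Suc n)"
  proof -
    have "(\<Sum>j=1..Suc n. (real (Suc n choose j) - 1) * Bp j / real j)
      = (\<Sum>j=1..Suc n. (real (n choose j) - 1) * Bp j / real j + real (Suc n choose j) * Bp j / real (Suc n))"
    proof (rule sum.cong)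
      fix j assume "j \<in> {1..Suc n}"
      then obtain k where k: "j = Suc k" by (cases j) auto
      have e: "real (Suc k) * real (Suc n choose Suc k) = real (Suc n) * real (n choose k)"
        using Suc_times_binomial[of k n] by (metis of_nat_mult)
      have "real (Suc n choose Suc k) / real (Suc n) = real (n choose k) / real (Suc k)"
        using e by (simp add: field_simps)
      then show "(real (Suc n choose j) - 1) * Bp j / real j = (real (n choose j) - 1) * Bp j / real j + real (Suc n choose j) * Bp j / real (Suc n)"
      proof -
        have cs: "real (Suc n choose Suc k) = real (n choose Suc k) + real (n choose k)" by simp
        have "(real (Suc n choose Suc k) - 1) * Bp (Suc k) / real (Suc k)
           = (real (n choose Suc k) - 1) * Bp (Suc k) / real (Suc k) + (real (n choose k) / real (Suc k)) * Bp (Suc k)"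
          unfolding cs by (simp add: field_simps del: of_nat_Suc)
        also have "\<dots> = (real (n choose Suc k) - 1) * Bp (Suc k) / real (Suc k) + real (Suc n choose Suc k) * Bp (Suc k) / real (Suc n)"
          by (subst \<open>real (Suc n choose Suc k) / real (Suc n) = real (n choose k) / real (Suc k)\<close>[symmetric]) simp
        finally show ?thesis unfolding k .
      qed
    qed simp
    also have "\<dots> = (\<Sum>j=1..Suc n. (real (n choose j) - 1) * Bp j / real j) + (\<Sum>j=1..Suc n. real (Suc n choose j) * Bp j) / real (Suc n)"
      by (simp only: sum.distrib sum_divide_distrib)
    finally show ?thesis .
  qed
  have bp: "Bp (Suc n) = bernoulli (Suc n)" using Suc by (simp add: Bp_def)
  have first: "(\<Sum>j=1..Suc n. (real (n choose j) - 1) * Bp j / real j) = real n - harm n - bernoulli (Suc n) / real (Suc n)"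
    using Suc.IH bp by (simp add: binomial_eq_0)
  show ?case
    unfolding split first sumBp[OF Suc.hyps] harm_Suc
    by (simp add: field_simps del: of_nat_Suc) (simp add: field_simps)
qed

theorem mainTheorem6:
  fixes n :: nat
  assumes "n \<ge> 1"
  shows "(\<Sum>j=1..n. (-1) ^ j * (real (n choose j) - 1) * bernoulli j / real j)
           = real n - harm n"
proof -
  have "(\<Sum>j=1..n. (-1) ^ j * (real (n choose j) - 1) * bernoulli j / real j)
      = (\<Sum>j=1..n. (real (n choose j) - 1) * Bp j / real j)"
  proof (rule sum.cong)
    fix j
    show "(-1) ^ j * (real (n choose j) - 1) * bernoulli j / real j = (real (n choose j) - 1) * Bp j / real j"
    proof -
      have "(-1) ^ j * (real (n choose j) - 1) * bernoulli j / real j = (real (n choose j) - 1) * ((-1) ^ j * bernoulli j) / real j"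
        by (simp only: mult_ac)
      also have "\<dots> = (real (n choose j) - 1) * Bp j / real j"
        by (simp only: bern_sign Bp_def)
      finally show ?thesis .
    qed
  qed simp
  also have "\<dots> = real n - harm n" using mainBp[OF assms] .
  finally show ?thesis .
qed

end
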